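(* Let $\mathbb{X},\mathbb{Y}$ be Banach spaces, $g:\mathbb{X}\to\mathbb{Y}$ continuously differentiable, $f:\mathbb{Y}\to\mathbb{R}\cup\{+\infty\}$ proper, lower semicontinuous and convex, $S_f:=\{y:f(y)\le0\}$ and $\mathcal{S}:=\{x:(f\circ g)(x)\le0\}=g^{-1}(S_f)$. Let $\bar x\in\mathcal{S}$ with $g(\bar x)\in{\rm int}({\rm dom} f)$ and suppose $g$ is metrically regular around $\bar x$. Then $\mathcal{S}$ has the Shapiro first order contact property around $\bar x$, there is $\delta>0$ with $\mathbf{T}^{\mathbf B}(\mathcal{S},x)=\nabla g(x)^{-1}(\mathbf{T}^{\mathbf B}(S_f,g(x)))$ for all $x\in\mathcal{S}\cap\mathbf{B}(\bar x,\delta)$, and $f\circ g$ has the epigraphical Shapiro first order contact property at $\bar x$.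
   Context: $\mathbf{B}(a,\delta)$ is the open ball with center $a$ and radius $\delta$; $\mathbf{d}(x,D):=\inf\{\|x-y\|:y\in D\}$. Bouligand tangent cone $\mathbf{T}^{\mathbf B}(C,c)$: all $v$ with $v_n\to v$, $t_n\downarrow0$, $c+t_nv_n\in C$. A closed set $C$ has the Shapiro first order contact property at $a\in C$ if for every $\varepsilon>0$ there is $\delta>0$ with $\mathbf{d}(x-u,\mathbf{T}^{\mathbf B}(C,u))\le\varepsilon\|x-u\|$ for all $x,u\in C\cap\mathbf{B}(a,\delta)$; around $\bar x$ means at every point of $C\cap U$ for some neighborhood $U$ of $\bar x$. A function $\varphi$ has the epigraphical Shapiro first order contact property at $\bar x$ if ${\rm epi}(\varphi)=\{(x,\alpha):\varphi(x)\le\alpha\}\subseteq\mathbb{X}\times\mathbb{R}$ (norm $\|x\|+|\alpha|$) has the Shapiro first order contact property at $(\bar x,\varphi(\bar x))$. $g$ is metrically regular around $\bar x$ if there exist $\kappa>0$ and neighborhoods $U$ of $\bar x$, $V$ of $g(\bar x)$ with $\mathbf{d}(x,g^{-1}(y))\le\kappa\|g(x)-y\|$ for all $(x,y)\in U\times V$. *)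

theory Defs
  imports "HOL-Analysis.Analysis"
begin

(* distance from a point to a set, w.r.t. a norm-like function N; value +\<infinity> for the empty set *)
definition setdistN :: "('a::minus \<Rightarrow> real) \<Rightarrow> 'a \<Rightarrow> 'a set \<Rightarrow> ereal" where
  "setdistN N x D = (INF y\<in>D. ereal (N (x - y)))"

abbreviation setdist_pt :: "'a::real_normed_vector \<Rightarrow> 'a set \<Rightarrow> ereal" where
  "setdist_pt x D \<equiv> setdistN norm x D"

definition bouligand_cone :: "'a::real_normed_vector set \<Rightarrow> 'a \<Rightarrow> 'a set" where
  "bouligand_cone C c = {v. \<exists>vs ts. (vs \<longlonglongrightarrow> v) \<and> (ts \<longlonglongrightarrow> 0) \<and>
       (\<forall>n. ts n > (0::real)) \<and> decseq ts \<and> (\<forall>n. c + ts n *\<^sub>R vs n \<in> C)}"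

definition shapiro_at_N :: "('a::real_normed_vector \<Rightarrow> real) \<Rightarrow> 'a set \<Rightarrow> 'a \<Rightarrow> bool" where
  "shapiro_at_N N C a \<longleftrightarrow> a \<in> C \<and> (\<forall>\<epsilon>>0. \<exists>\<delta>>0. \<forall>x\<in>C. \<forall>u\<in>C.
      N (x - a) < \<delta> \<longrightarrow> N (u - a) < \<delta> \<longrightarrow>
      setdistN N (x - u) (bouligand_cone C u) \<le> ereal (\<epsilon> * N (x - u)))"

abbreviation shapiro_at :: "'a::real_normed_vector set \<Rightarrow> 'a \<Rightarrow> bool" where
  "shapiro_at C a \<equiv> shapiro_at_N norm C a"

definition shapiro_around :: "'a::real_normed_vector set \<Rightarrow> 'a \<Rightarrow> bool" where
  "shapiro_around C xb \<longleftrightarrow> (\<exists>U. open U \<and> xb \<in> U \<and> (\<forall>a\<in>C \<inter> U. shapiro_at C a))"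

definition epigraph :: "('a \<Rightarrow> ereal) \<Rightarrow> ('a \<times> real) set" where
  "epigraph \<phi> = {(x, \<alpha>). \<phi> x \<le> ereal \<alpha>}"

definition sumnorm :: "('a::real_normed_vector \<times> real) \<Rightarrow> real" where
  "sumnorm p = norm (fst p) + \<bar>snd p\<bar>"

definition epi_shapiro_at :: "('a::real_normed_vector \<Rightarrow> ereal) \<Rightarrow> 'a \<Rightarrow> bool" where
  "epi_shapiro_at \<phi> xb \<longleftrightarrow> shapiro_at_N sumnorm (epigraph \<phi>) (xb, real_of_ereal (\<phi> xb))"

definition metrically_regular_around :: "('a::real_normed_vector \<Rightarrow> 'b::real_normed_vector) \<Rightarrow> 'a \<Rightarrow> bool" where
  "metrically_regular_around g xb \<longleftrightarrow> (\<exists>\<kappa>>0. \<exists>U V. open U \<and> xb \<in> U \<and> open V \<and> g xb \<in> V \<and>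
     (\<forall>x\<in>U. \<forall>y\<in>V. setdist_pt x (g -` {y}) \<le> ereal (\<kappa> * norm (g x - y))))"

definition proper_fun :: "('a \<Rightarrow> ereal) \<Rightarrow> bool" where
  "proper_fun f \<longleftrightarrow> (\<forall>y. f y \<noteq> -\<infinity>) \<and> (\<exists>y. f y \<noteq> \<infinity>)"

definition lsc_fun :: "('a::topological_space \<Rightarrow> ereal) \<Rightarrow> bool" where
  "lsc_fun f \<longleftrightarrow> (\<forall>c::real. closed {y. f y \<le> ereal c})"

definition convex_fun :: "('a::real_vector \<Rightarrow> ereal) \<Rightarrow> bool" where
  "convex_fun f \<longleftrightarrow> convex (epigraph f)"

definition effdom :: "('a \<Rightarrow> ereal) \<Rightarrow> 'a set" where
  "effdom f = {y. f y < \<infinity>}"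

end

theory Submission
  imports Defs
begin

lemma sd_le: "y \<in> T \<Longrightarrow> N (v - y) \<le> b \<Longrightarrow> setdistN N v T \<le> ereal b"
  unfolding setdistN_def by (rule INF_lower2) auto

lemma sd_lt: "setdistN N v T < ereal b \<Longrightarrow> \<exists>y\<in>T. N (v - y) < b"
  unfolding setdistN_def by (auto simp: INF_less_iff)

lemma cone_ev:
  assumes "vs \<longlonglongrightarrow> v" "ts \<longlonglongrightarrow> 0" "\<forall>n. ts n > (0::real)" "decseq ts"
    "eventually (\<lambda>n. c + ts n *\<^sub>R vs n \<in> C) sequentially"
  shows "v \<in> bouligand_cone C c"
proof -
  obtain N where N: "\<forall>n\<ge>N. c + ts n *\<^sub>R vs n \<in> C"
    using assms(5) unfolding eventually_sequentially by auto
  show ?thesis unfolding bouligand_cone_def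
  proof (intro CollectI exI[of _ "\<lambda>n. vs (n+N)"] exI[of _ "\<lambda>n. ts (n+N)"] conjI allI)
    show "(\<lambda>n. vs (n + N)) \<longlonglongrightarrow> v" using LIMSEQ_ignore_initial_segment[OF assms(1)] .
    show "(\<lambda>n. ts (n + N)) \<longlonglongrightarrow> 0" using LIMSEQ_ignore_initial_segment[OF assms(2)] .
    show "decseq (\<lambda>n. ts (n + N))" using assms(4) by (intro decseq_SucI) (simp add: decseq_SucD)
    show "0 < ts (n + N)" for n using assms(3) by blast
    show "c + ts (n + N) *\<^sub>R vs (n + N) \<in> C" for n using N[rule_format, of "n+N"] by simp
  qed
qed

lemma exact_solve:
  fixes A :: "'a::banach \<Rightarrow> 'b::real_normed_vector"
  assumes lin: "bounded_linear A" and c: "c \<ge> 0"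
    and apx: "\<And>r. \<exists>h. norm h \<le> c * norm r \<and> norm (A h - r) \<le> norm r / 2"
  shows "\<exists>h. A h = r \<and> norm h \<le> 2 * c * norm r"
proof -
  obtain H where H: "\<And>r. norm (H r) \<le> c * norm r \<and> norm (A (H r) - r) \<le> norm r / 2"
    using apx by metis
  define R where "R = rec_nat r (\<lambda>_ x. x - A (H x))"
  have R0: "R 0 = r" and RS: "\<And>n. R (Suc n) = R n - A (H (R n))" by (simp_all add: R_def)
  have Rb: "norm (R n) \<le> norm r * (1/2)^n" for n
  proof (induction n)
    case 0 then show ?case by (simp add: R0)
  next
    case (Suc n)
    have "norm (R (Suc n)) = norm (A (H (R n)) - R n)" by (simp add: RS norm_minus_commute)
    also have "\<dots> \<le> norm (R n) / 2" using H by blast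
    also have "\<dots> \<le> norm r * (1/2)^Suc n" using Suc by simp
    finally show ?case .
  qed
  define hs where "hs n = H (R n)" for n
  have hb: "norm (hs n) \<le> c * norm r * (1/2)^n" for n
    using H[of "R n"] Rb[of n] c unfolding hs_def
    by (smt (verit, ccfv_SIG) mult.assoc mult_left_mono)
  have sg: "summable (\<lambda>n. c * norm r * (1/2::real)^n)"
    by (intro summable_mult summable_geometric) simp
  have sh: "summable hs"
    by (rule summable_comparison_test[OF _ sg]) (use hb in auto)
  have "(\<lambda>n. norm r * (1/2::real)^n) \<longlonglongrightarrow> norm r * 0"
    by (intro tendsto_mult tendsto_const LIMSEQ_realpow_zero) auto
  hence lim0: "(\<lambda>n. norm r * (1/2::real)^n) \<longlonglongrightarrow> 0" by simp
  have ev: "\<forall>\<^sub>F n in sequentially. norm (norm (R n)) \<le> norm r * (1/2)^n"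
    using Rb by (simp add: always_eventually)
  have "(\<lambda>n. norm (R n)) \<longlonglongrightarrow> 0"
    by (rule Lim_null_comparison[OF ev lim0])
  hence R0': "R \<longlonglongrightarrow> 0" by (rule tendsto_norm_zero_cancel)
  have "(\<lambda>n. R n - R (Suc n)) sums (R 0 - 0)" by (rule telescope_sums'[OF R0'])
  moreover have "(\<lambda>n. R n - R (Suc n)) = (\<lambda>n. A (hs n))" by (simp add: RS hs_def)
  ultimately have "(\<lambda>n. A (hs n)) sums r" by (simp add: R0)
  moreover have "(\<lambda>n. A (hs n)) sums A (suminf hs)"
    using bounded_linear.sums[OF lin summable_sums[OF sh]] .
  ultimately have "A (suminf hs) = r" using sums_unique2 by blast
  moreover have "norm (suminf hs) \<le> (\<Sum>n. c * norm r * (1/2::real)^n)"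
    by (rule norm_suminf_le[OF hb sg])
  moreover have "(\<Sum>n. c * norm r * (1/2::real)^n) = 2 * c * norm r"
    by (subst suminf_mult) (simp_all add: suminf_geometric)
  ultimately show ?thesis by auto
qed


lemma aux_div: "t > 0 \<Longrightarrow> s > 0 \<Longrightarrow> (k*(t*N) + t/s)/t = k*N + 1/(s::real)"
  by (simp add: field_simps)

lemma aux_d4: "X \<noteq> 0 \<Longrightarrow> d / (4 * X) * X = d/(4::real)"
  by (simp add: field_simps)

lemma aux_eps: "t>0 \<Longrightarrow> k>0 \<Longrightarrow> 1/(2*(k+1)) * ((k+1)*(t*N))/t = N/(2::real)"
proof -
  assume a: "t>0" "k>0"
  have "1/(2*(k+1)) * ((k+1)*(t*N))/t = (((k+1)*t) / ((k+1)*t)) * (N/2)" by (simp add: mult_ac)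
  also have "\<dots> = N/2" using a by simp
  finally show ?thesis .
qed

locale ctx =
  fixes G :: "'a::banach \<Rightarrow> 'b::real_normed_vector" and G' :: "'a \<Rightarrow> 'a \<Rightarrow> 'b"
    and K :: "'b set" and xb :: 'a and \<kappa> :: real and U :: "'a set" and V :: "'b set"
  assumes lin: "\<And>x. bounded_linear (G' x)"
    and SD: "\<And>a e. e > 0 \<Longrightarrow> \<exists>d>0. \<forall>x z. norm (x - a) < d \<longrightarrow> norm (z - a) < d \<longrightarrow>
               norm (G z - G x - G' x (z - x)) \<le> e * norm (z - x)"
    and contG: "continuous_on UNIV G"
    and Kconv: "convex K"
    and kpos: "\<kappa> > 0" and openU: "open U" and xbU: "xb \<in> U" and openV: "open V" and xbV: "G xb \<in> V"
    and MR: "\<And>x y e. x \<in> U \<Longrightarrow> y \<in> V \<Longrightarrow> e > 0 \<Longrightarrow>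
               \<exists>z. G z = y \<and> norm (x - z) \<le> \<kappa> * norm (G x - y) + e"
begin

lemma deriv_seq:
  assumes ts: "ts \<longlonglongrightarrow> 0" and tpos: "\<forall>n. ts n > 0" and vs: "vs \<longlonglongrightarrow> v"
  shows "(\<lambda>n. (G (x + ts n *\<^sub>R vs n) - G x) /\<^sub>R ts n) \<longlonglongrightarrow> G' x v"
proof -
  obtain B where B: "B > 0" "\<And>n. norm (vs n) \<le> B"
    using convergent_imp_Bseq[of vs] vs unfolding Bseq_def convergent_def by blast
  have tv: "(\<lambda>n. ts n *\<^sub>R vs n) \<longlonglongrightarrow> 0"
    using tendsto_scaleR[OF ts vs] by simp
  have "(\<lambda>n. (G (x + ts n *\<^sub>R vs n) - G x) /\<^sub>R ts n - G' x (vs n)) \<longlonglongrightarrow> 0"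
  proof (rule LIMSEQ_I)
    fix r :: real assume r: "r > 0"
    obtain d where d: "d > 0" "\<forall>x' z. norm (x' - x) < d \<longrightarrow> norm (z - x) < d \<longrightarrow>
        norm (G z - G x' - G' x' (z - x')) \<le> (r / (2*B)) * norm (z - x')"
      using SD[of "r/(2*B)" x] r B by auto
    obtain no where no: "\<forall>n\<ge>no. norm (ts n *\<^sub>R vs n - 0) < d"
      using LIMSEQ_D[OF tv d(1)] by blast
    show "\<exists>no. \<forall>n\<ge>no. norm ((G (x + ts n *\<^sub>R vs n) - G x) /\<^sub>R ts n - G' x (vs n) - 0) < r"
    proof (intro exI allI impI)
      fix n assume n: "no \<le> n"
      have t: "ts n > 0" using tpos by blast
      have eq: "(G (x + ts n *\<^sub>R vs n) - G x) /\<^sub>R ts n - G' x (vs n)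
          = (G (x + ts n *\<^sub>R vs n) - G x - G' x (ts n *\<^sub>R vs n)) /\<^sub>R ts n"
        using t by (simp add: linear_simps[OF lin] algebra_simps)
      have "norm (G (x + ts n *\<^sub>R vs n) - G x - G' x (ts n *\<^sub>R vs n))
            \<le> (r / (2*B)) * norm (ts n *\<^sub>R vs n)"
        using d(2)[rule_format, of x "x + ts n *\<^sub>R vs n"] no n d(1) by auto
      also have "\<dots> = ts n * ((r / (2*B)) * norm (vs n))" using t by simp
      also have "\<dots> \<le> ts n * (r/2)"
      proof -
        have "(r / (2*B)) * norm (vs n) \<le> (r / (2*B)) * B"
          using B r by (intro mult_left_mono) auto
        also have "\<dots> = r/2" using B by simp
        finally show ?thesis using t by (intro mult_left_mono) auto
      qed
      finally have "norm ((G (x + ts n *\<^sub>R vs n) - G x - G' x (ts n *\<^sub>R vs n)) /\<^sub>R ts n) \<le> r/2"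
        using t by (simp add: divide_simps mult.commute)
      then show "norm ((G (x + ts n *\<^sub>R vs n) - G x) /\<^sub>R ts n - G' x (vs n) - 0) < r"
        using eq r by simp
    qed
  qed
  moreover have "(\<lambda>n. G' x (vs n)) \<longlonglongrightarrow> G' x v"
    using bounded_linear.tendsto[OF lin vs] .
  ultimately have "(\<lambda>n. ((G (x + ts n *\<^sub>R vs n) - G x) /\<^sub>R ts n - G' x (vs n)) + G' x (vs n)) \<longlonglongrightarrow> 0 + G' x v"
    by (rule tendsto_add)
  then show ?thesis by simp
qed


lemma cone_sub:
  assumes v: "v \<in> bouligand_cone (G -` K) x"
  shows "G' x v \<in> bouligand_cone K (G x)"
proof -
  obtain vs ts where vs: "vs \<longlonglongrightarrow> v" and ts: "ts \<longlonglongrightarrow> 0" and tp: "\<forall>n. ts n > (0::real)"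
    and dec: "decseq ts" and inC: "\<forall>n. x + ts n *\<^sub>R vs n \<in> G -` K"
    using v unfolding bouligand_cone_def by blast
  define ws where "ws n = (G (x + ts n *\<^sub>R vs n) - G x) /\<^sub>R ts n" for n
  have "ws \<longlonglongrightarrow> G' x v" unfolding ws_def by (rule deriv_seq[OF ts tp vs])
  moreover have "G x + ts n *\<^sub>R ws n \<in> K" for n
  proof -
    have "ts n \<noteq> 0" using tp by (metis less_irrefl)
    then have "G x + ts n *\<^sub>R ws n = G (x + ts n *\<^sub>R vs n)" by (simp add: ws_def)
    then show ?thesis using inC by simp
  qed
  ultimately show ?thesis unfolding bouligand_cone_def using ts tp dec by blast
qed

lemma cone_sup:
  assumes xU: "x \<in> U" and xV: "G x \<in> V" and w: "G' x w \<in> bouligand_cone K (G x)"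
  shows "w \<in> bouligand_cone (G -` K) x"
proof -
  obtain ys ts where ys: "ys \<longlonglongrightarrow> G' x w" and ts: "ts \<longlonglongrightarrow> 0" and tp: "\<forall>n. ts n > (0::real)"
    and dec: "decseq ts" and inK: "\<forall>n. G x + ts n *\<^sub>R ys n \<in> K"
    using w unfolding bouligand_cone_def by blast
  have "(\<lambda>n. x + ts n *\<^sub>R w) \<longlonglongrightarrow> x + 0 *\<^sub>R w"
    by (intro tendsto_add tendsto_const tendsto_scaleR ts)
  hence E1: "eventually (\<lambda>n. x + ts n *\<^sub>R w \<in> U) sequentially"
    using topological_tendstoD[OF _ openU] xU by simp
  have "(\<lambda>n. G x + ts n *\<^sub>R ys n) \<longlonglongrightarrow> G x + 0 *\<^sub>R G' x w"
    by (intro tendsto_add tendsto_const tendsto_scaleR ts ys)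
  hence E2: "eventually (\<lambda>n. G x + ts n *\<^sub>R ys n \<in> V) sequentially"
    using topological_tendstoD[OF _ openV] xV by simp
  define P where "P n z \<longleftrightarrow> G z = G x + ts n *\<^sub>R ys n \<and>
      norm ((x + ts n *\<^sub>R w) - z) \<le> \<kappa> * norm (G (x + ts n *\<^sub>R w) - (G x + ts n *\<^sub>R ys n)) + ts n / real (Suc n)" for n z
  define zs where "zs n = (SOME z. P n z)" for n
  have EP: "eventually (\<lambda>n. P n (zs n)) sequentially"
    using E1 E2
  proof eventually_elim
    case (elim n)
    have "ts n / real (Suc n) > 0" using tp by simp
    then have "\<exists>z. P n z" unfolding P_def using MR[OF elim(1) elim(2)] by blast
    then show ?case unfolding zs_def by (rule someI_ex)
  qed
  define vs where "vs n = (zs n - x) /\<^sub>R ts n" for n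
  have tne: "ts n \<noteq> 0" for n using tp by (metis less_irrefl)
  have EC: "eventually (\<lambda>n. x + ts n *\<^sub>R vs n \<in> G -` K) sequentially"
    using EP
  proof eventually_elim
    case (elim n)
    have "x + ts n *\<^sub>R vs n = zs n" using tne[of n] by (simp add: vs_def)
    then show ?case using elim inK unfolding P_def by simp
  qed
  define b where "b n = \<kappa> * norm ((G (x + ts n *\<^sub>R w) - G x) /\<^sub>R ts n - ys n) + 1 / real (Suc n)" for n
  have "(\<lambda>n. (G (x + ts n *\<^sub>R w) - G x) /\<^sub>R ts n) \<longlonglongrightarrow> G' x w"
    using deriv_seq[OF ts tp tendsto_const[of w]] .
  hence "(\<lambda>n. (G (x + ts n *\<^sub>R w) - G x) /\<^sub>R ts n - ys n) \<longlonglongrightarrow> G' x w - G' x w"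
    by (intro tendsto_diff ys)
  hence "(\<lambda>n. norm ((G (x + ts n *\<^sub>R w) - G x) /\<^sub>R ts n - ys n)) \<longlonglongrightarrow> 0"
    using tendsto_norm_zero by force
  hence "b \<longlonglongrightarrow> \<kappa> * 0 + 0" unfolding b_def
    by (intro tendsto_add tendsto_mult tendsto_const LIMSEQ_inverse_real_of_nat[unfolded inverse_eq_divide])
  hence b0: "b \<longlonglongrightarrow> 0" by simp
  have EB: "eventually (\<lambda>n. norm (vs n - w) \<le> b n) sequentially"
    using EP
  proof eventually_elim
    case (elim n)
    have t: "ts n > 0" using tp by blast
    have e1: "vs n - w = - ((x + ts n *\<^sub>R w) - zs n) /\<^sub>R ts n"
      using tne[of n] by (simp add: vs_def algebra_simps)
    have e2: "G (x + ts n *\<^sub>R w) - (G x + ts n *\<^sub>R ys n)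
        = ts n *\<^sub>R ((G (x + ts n *\<^sub>R w) - G x) /\<^sub>R ts n - ys n)"
      using tne[of n] by (simp add: algebra_simps)
    have "norm (vs n - w) = norm ((x + ts n *\<^sub>R w) - zs n) / ts n"
      using t by (simp add: e1 norm_minus_commute divide_inverse mult.commute)
    also have "\<dots> \<le> (\<kappa> * (ts n * norm ((G (x + ts n *\<^sub>R w) - G x) /\<^sub>R ts n - ys n)) + ts n / real (Suc n)) / ts n"
      using elim t unfolding P_def e2 by (intro divide_right_mono) auto
    also have "\<dots> = b n" unfolding b_def by (rule aux_div) (use t in auto)
    finally show ?case .
  qed
  have "(\<lambda>n. vs n - w) \<longlonglongrightarrow> 0"
    by (rule Lim_null_comparison[OF EB b0])
  hence "vs \<longlonglongrightarrow> w" using Lim_null[of vs w sequentially] by simp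
  then show ?thesis by (rule cone_ev[OF _ ts tp dec EC])
qed

lemma cone_conv:
  assumes "k \<in> K" "c \<in> K"
  shows "k - c \<in> bouligand_cone K c"
proof -
  define ts where "ts n = inverse (real (Suc n))" for n
  have "c + ts n *\<^sub>R (k - c) \<in> K" for n
  proof -
    have t: "0 \<le> ts n" "ts n \<le> 1" by (auto simp: ts_def field_simps)
    have "c + ts n *\<^sub>R (k - c) = (1 - ts n) *\<^sub>R c + ts n *\<^sub>R k" by (simp add: algebra_simps)
    then show ?thesis using Kconv assms t unfolding convex_def
      by (metis diff_add_cancel diff_ge_0_iff_ge)
  qed
  moreover have "ts \<longlonglongrightarrow> 0" unfolding ts_def by (rule LIMSEQ_inverse_real_of_nat)
  moreover have "decseq ts" unfolding ts_def
    by (intro decseq_SucI) (simp add: field_simps)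
  moreover have "\<forall>n. ts n > 0" by (simp add: ts_def)
  ultimately show ?thesis unfolding bouligand_cone_def
    by (intro CollectI exI[of _ "\<lambda>n. k - c"] exI[of _ ts]) auto
qed


lemma region: "\<exists>\<rho>>0. \<forall>x. norm (x - xb) < \<rho> \<longrightarrow> x \<in> U \<and> G x \<in> V"
proof -
  have "open (U \<inter> G -` V)" using openU open_vimage[OF openV contG] by blast
  moreover have "xb \<in> U \<inter> G -` V" using xbU xbV by blast
  ultimately obtain e where e: "e > 0" "ball xb e \<subseteq> U \<inter> G -` V"
    using open_contains_ball by blast
  have "\<forall>x. norm (x - xb) < e \<longrightarrow> x \<in> U \<and> G x \<in> V"
  proof (intro allI impI)
    fix x assume "norm (x - xb) < e"
    hence "x \<in> ball xb e" by (simp add: dist_norm norm_minus_commute)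
    thus "x \<in> U \<and> G x \<in> V" using e(2) by blast
  qed
  thus ?thesis using e(1) by blast
qed

lemma lin_apx: "\<exists>\<rho>>0. \<exists>c>0. \<forall>u. norm (u - xb) < \<rho> \<longrightarrow>
   (\<forall>r. \<exists>h. norm h \<le> c * norm r \<and> norm (G' u h - r) \<le> norm r / 2)"
proof -
  define \<epsilon> where "\<epsilon> = 1 / (2 * (\<kappa> + 1))"
  have \<epsilon>: "\<epsilon> > 0" using kpos by (simp add: \<epsilon>_def)
  obtain d where d: "d > 0" "\<forall>x z. norm (x - xb) < d \<longrightarrow> norm (z - xb) < d \<longrightarrow>
        norm (G z - G x - G' x (z - x)) \<le> \<epsilon> * norm (z - x)"
    using SD[OF \<epsilon>] by blast
  obtain \<rho>1 where \<rho>1: "\<rho>1 > 0" "\<forall>x. norm (x - xb) < \<rho>1 \<longrightarrow> x \<in> U \<and> G x \<in> V"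
    using region by blast
  show ?thesis
  proof (rule exI[of _ "min \<rho>1 (d/2)"], intro exI[of _ "\<kappa> + 1"] conjI allI impI)
    show "min \<rho>1 (d/2) > 0" using \<rho>1 d by simp
    show "\<kappa> + 1 > 0" using kpos by simp
    fix u r assume u: "norm (u - xb) < min \<rho>1 (d/2)"
    show "\<exists>h. norm h \<le> (\<kappa> + 1) * norm r \<and> norm (G' u h - r) \<le> norm r / 2"
    proof (cases "r = 0")
      case True
      then show ?thesis by (intro exI[of _ 0]) (simp add: linear_simps[OF lin])
    next
      case False
      have nr: "norm r > 0" using False by simp
      have uU: "u \<in> U" and uV: "G u \<in> V" using \<rho>1 u by auto
      obtain e where e: "e > 0" "ball (G u) e \<subseteq> V"
        using open_contains_ball openV uV by blast
      define t where "t = min (e / (2 * norm r)) (d / (4 * (\<kappa> + 1) * norm r))"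
      have t: "t > 0" using e d nr kpos by (simp add: t_def)
      have t1: "t * norm r \<le> e / 2" using nr
        by (simp add: t_def min_def field_simps split: if_splits)
      have t2: "(\<kappa> + 1) * (t * norm r) \<le> d / 4"
      proof -
        have "t \<le> d / (4 * (\<kappa> + 1) * norm r)" by (simp add: t_def)
        hence "t * ((\<kappa> + 1) * norm r) \<le> d / (4 * (\<kappa> + 1) * norm r) * ((\<kappa> + 1) * norm r)"
          using kpos nr by (intro mult_right_mono) auto
        also have "\<dots> = d / (4 * ((\<kappa> + 1) * norm r)) * ((\<kappa> + 1) * norm r)"
          by (simp only: mult.assoc)
        also have "\<dots> = d / 4" using kpos nr by (intro aux_d4) auto
        finally show ?thesis by (simp add: mult_ac)
      qed
      define y where "y = G u + t *\<^sub>R r"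
      have "y \<in> V" using e t1 e(1) t nr unfolding y_def
        by (intro subsetD[OF e(2)]) (simp add: dist_norm)
      obtain z where z: "G z = y" "norm (u - z) \<le> \<kappa> * norm (G u - y) + t * norm r"
        using MR[OF uU \<open>y \<in> V\<close>, of "t * norm r"] t nr by auto
      have "norm (G u - y) = t * norm r" using t by (simp add: y_def)
      hence zu: "norm (z - u) \<le> (\<kappa> + 1) * (t * norm r)"
        using z(2) by (simp add: norm_minus_commute algebra_simps)
      have "norm (z - xb) \<le> norm (z - u) + norm (u - xb)"
        using norm_triangle_ineq[of "z - u" "u - xb"] by simp
      also have "\<dots> < d" using zu t2 u d(1) by auto
      finally have zx: "norm (z - xb) < d" .
      have ux: "norm (u - xb) < d" using u d by auto
      have sd: "norm (G z - G u - G' u (z - u)) \<le> \<epsilon> * norm (z - u)"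
        using d(2) zx ux by blast
      define h where "h = (z - u) /\<^sub>R t"
      have "norm h = norm (z - u) / t" using t by (simp add: h_def divide_inverse mult.commute)
      also have "\<dots> \<le> (\<kappa> + 1) * norm r" using zu t by (simp add: field_simps)
      finally have hb: "norm h \<le> (\<kappa> + 1) * norm r" .
      have "G' u h - r = - (G z - G u - G' u (z - u)) /\<^sub>R t"
        using t z(1) by (simp add: h_def y_def linear_simps[OF lin] algebra_simps)
      hence "norm (G' u h - r) = norm (G z - G u - G' u (z - u)) / t"
        using t by (simp add: divide_inverse mult.commute norm_minus_commute)
      also have "\<dots> \<le> \<epsilon> * norm (z - u) / t" using sd t by (simp add: divide_right_mono)
      also have "\<dots> \<le> \<epsilon> * ((\<kappa> + 1) * (t * norm r)) / t"
        using zu t \<epsilon> by (intro divide_right_mono mult_left_mono) auto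
      also have "\<dots> = norm r / 2" using t kpos unfolding \<epsilon>_def by (rule aux_eps)
      finally show ?thesis using hb by blast
    qed
  qed
qed


lemma tangent_formula: "\<exists>\<rho>>0. \<forall>x\<in>G -` K \<inter> ball xb \<rho>.
    bouligand_cone (G -` K) x = G' x -` bouligand_cone K (G x)"
proof -
  obtain \<rho>1 where \<rho>1: "\<rho>1 > 0" "\<forall>x. norm (x - xb) < \<rho>1 \<longrightarrow> x \<in> U \<and> G x \<in> V"
    using region by blast
  have "\<forall>x\<in>G -` K \<inter> ball xb \<rho>1. bouligand_cone (G -` K) x = G' x -` bouligand_cone K (G x)"
  proof
    fix x assume x: "x \<in> G -` K \<inter> ball xb \<rho>1"
    hence "norm (x - xb) < \<rho>1" by (simp add: dist_norm norm_minus_commute)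
    hence xU: "x \<in> U" and xV: "G x \<in> V" using \<rho>1 by auto
    show "bouligand_cone (G -` K) x = G' x -` bouligand_cone K (G x)"
      using cone_sub cone_sup[OF xU xV] by blast
  qed
  thus ?thesis using \<rho>1(1) by blast
qed

lemma shapiro: "\<exists>\<rho>>0. \<forall>a\<in>G -` K \<inter> ball xb \<rho>. shapiro_at (G -` K) a"
proof -
  obtain \<rho>1 where \<rho>1: "\<rho>1 > 0" "\<forall>x. norm (x - xb) < \<rho>1 \<longrightarrow> x \<in> U \<and> G x \<in> V"
    using region by blast
  obtain \<rho>2 c where \<rho>2: "\<rho>2 > 0" "c > 0" and apx: "\<forall>u. norm (u - xb) < \<rho>2 \<longrightarrow>
      (\<forall>r. \<exists>h. norm h \<le> c * norm r \<and> norm (G' u h - r) \<le> norm r / 2)"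
    using lin_apx by blast
  define \<rho> where "\<rho> = min \<rho>1 \<rho>2"
  have "\<forall>a\<in>G -` K \<inter> ball xb \<rho>. shapiro_at (G -` K) a"
  proof
    fix a assume a: "a \<in> G -` K \<inter> ball xb \<rho>"
    have na: "norm (a - xb) < \<rho>" using a by (simp add: dist_norm norm_minus_commute)
    show "shapiro_at (G -` K) a" unfolding shapiro_at_N_def
    proof (intro conjI allI impI)
      show "a \<in> G -` K" using a by blast
      fix \<epsilon> :: real assume \<epsilon>: "\<epsilon> > 0"
      define \<epsilon>' where "\<epsilon>' = \<epsilon> / (2 * c + 1)"
      have \<epsilon>': "\<epsilon>' > 0" using \<epsilon> \<rho>2 by (simp add: \<epsilon>'_def)
      obtain d where d: "d > 0" "\<forall>x z. norm (x - a) < d \<longrightarrow> norm (z - a) < d \<longrightarrow>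
          norm (G z - G x - G' x (z - x)) \<le> \<epsilon>' * norm (z - x)"
        using SD[OF \<epsilon>'] by blast
      define \<delta> where "\<delta> = min d (\<rho> - norm (a - xb))"
      show "\<exists>\<delta>>0. \<forall>x\<in>G -` K. \<forall>u\<in>G -` K. norm (x - a) < \<delta> \<longrightarrow> norm (u - a) < \<delta> \<longrightarrow>
          setdist_pt (x - u) (bouligand_cone (G -` K) u) \<le> ereal (\<epsilon> * norm (x - u))"
      proof (rule exI[of _ \<delta>], intro conjI ballI impI)
        show "\<delta> > 0" using d na by (simp add: \<delta>_def)
        fix x u assume x: "x \<in> G -` K" and u: "u \<in> G -` K"
          and xa: "norm (x - a) < \<delta>" and ua: "norm (u - a) < \<delta>"
        have "norm (u - xb) \<le> norm (u - a) + norm (a - xb)"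
          using norm_triangle_ineq[of "u - a" "a - xb"] by simp
        also have "\<dots> < \<rho>" using ua by (simp add: \<delta>_def)
        finally have ub: "norm (u - xb) < \<rho>" .
        hence uU: "u \<in> U" and uV: "G u \<in> V" using \<rho>1 by (auto simp: \<rho>_def)
        have apxu: "\<forall>r. \<exists>h. norm h \<le> c * norm r \<and> norm (G' u h - r) \<le> norm r / 2"
          using apx ub by (simp add: \<rho>_def)
        define r where "r = G x - G u - G' u (x - u)"
        have rb: "norm r \<le> \<epsilon>' * norm (x - u)"
          using d(2) xa ua unfolding r_def \<delta>_def by auto
        obtain e where e: "G' u e = r" "norm e \<le> 2 * c * norm r"
          using exact_solve[OF lin, where c=c and r=r] apxu \<rho>2 by auto
        define w where "w = (x - u) + e"
        have "G' u w = G x - G u" using e(1)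
          by (simp add: w_def r_def linear_simps[OF lin])
        moreover have "G x - G u \<in> bouligand_cone K (G u)" using cone_conv x u by simp
        ultimately have "w \<in> bouligand_cone (G -` K) u"
          using cone_sup[OF uU uV] by simp
        moreover have "norm ((x - u) - w) \<le> \<epsilon> * norm (x - u)"
        proof -
          have "norm ((x - u) - w) = norm e" by (simp add: w_def)
          also have "\<dots> \<le> 2 * c * (\<epsilon>' * norm (x - u))"
            using e(2) rb \<rho>2 by (smt (verit) mult_left_mono)
          also have "\<dots> \<le> \<epsilon> * norm (x - u)"
          proof -
            have "2 * c * \<epsilon>' \<le> \<epsilon>" using \<rho>2 \<epsilon> by (simp add: \<epsilon>'_def field_simps)
            thus ?thesis by (simp add: mult_right_mono mult.assoc[symmetric])
          qed
          finally show ?thesis .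
        qed
        ultimately show "setdist_pt (x - u) (bouligand_cone (G -` K) u) \<le> ereal (\<epsilon> * norm (x - u))"
          by (intro sd_le) 
      qed
    qed
  qed
  moreover have "\<rho> > 0" using \<rho>1 \<rho>2 by (simp add: \<rho>_def)
  ultimately show ?thesis by blast
qed

end


lemma nfst: "norm (fst p) \<le> norm p"
  using norm_fst_le[of "fst p" "snd p"] by (simp only: prod.collapse)

lemma sum_transfer:
  fixes C :: "('a::real_normed_vector \<times> real) set"
  assumes sh: "shapiro_at C a"
  shows "shapiro_at_N sumnorm C a"
proof -
  have N1: "norm p \<le> sumnorm p" for p :: "'a \<times> real"
    using norm_Pair_le[of "fst p" "snd p"] by (simp add: sumnorm_def)
  have N2: "sumnorm p \<le> 2 * norm p" for p :: "'a \<times> real"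
    using norm_fst_le[of "fst p" "snd p"] norm_snd_le[of "snd p" "fst p"]
    by (simp add: sumnorm_def)
  show ?thesis unfolding shapiro_at_N_def
  proof (intro conjI allI impI)
    show "a \<in> C" using sh unfolding shapiro_at_N_def by blast
    fix \<epsilon> :: real assume \<epsilon>: "\<epsilon> > 0"
    obtain \<delta> where \<delta>: "\<delta> > 0" "\<forall>x\<in>C. \<forall>u\<in>C. norm (x - a) < \<delta> \<longrightarrow> norm (u - a) < \<delta> \<longrightarrow>
        setdist_pt (x - u) (bouligand_cone C u) \<le> ereal (\<epsilon>/2 * norm (x - u))"
      using sh \<epsilon> unfolding shapiro_at_N_def by (meson half_gt_zero)
    show "\<exists>\<delta>>0. \<forall>x\<in>C. \<forall>u\<in>C. sumnorm (x - a) < \<delta> \<longrightarrow> sumnorm (u - a) < \<delta> \<longrightarrow>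
        setdistN sumnorm (x - u) (bouligand_cone C u) \<le> ereal (\<epsilon> * sumnorm (x - u))"
    proof (rule exI[of _ \<delta>], intro conjI ballI impI)
      show "\<delta> > 0" by (rule \<delta>(1))
      fix x u assume x: "x \<in> C" and u: "u \<in> C" and xa: "sumnorm (x - a) < \<delta>" and ua: "sumnorm (u - a) < \<delta>"
      have sd: "setdist_pt (x - u) (bouligand_cone C u) \<le> ereal (\<epsilon>/2 * norm (x - u))"
        using \<delta>(2) x u xa ua N1[of "x - a"] N1[of "u - a"] by auto
      show "setdistN sumnorm (x - u) (bouligand_cone C u) \<le> ereal (\<epsilon> * sumnorm (x - u))"
      proof (rule ereal_le_epsilon2)
        fix e :: real assume e: "e > 0"
        have "setdist_pt (x - u) (bouligand_cone C u) < ereal (\<epsilon>/2 * norm (x - u) + e/2)"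
          using sd e by (simp add: order_le_less_trans)
        then obtain y where y: "y \<in> bouligand_cone C u" "norm (x - u - y) < \<epsilon>/2 * norm (x - u) + e/2"
          using sd_lt by blast
        have "sumnorm (x - u - y) \<le> 2 * norm (x - u - y)" by (rule N2)
        also have "\<dots> \<le> \<epsilon> * norm (x - u) + e" using y(2) by simp
        also have "\<dots> \<le> \<epsilon> * sumnorm (x - u) + e" using N1[of "x - u"] \<epsilon> by simp
        finally have "setdistN sumnorm (x - u) (bouligand_cone C u) \<le> ereal (\<epsilon> * sumnorm (x - u) + e)"
          by (rule sd_le[OF y(1)])
        thus "setdistN sumnorm (x - u) (bouligand_cone C u) \<le> ereal (\<epsilon> * sumnorm (x - u)) + ereal e"
          by simp
      qed
    qed
  qed
qed

lemma SD_C1: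
  fixes g :: "'a::real_normed_vector \<Rightarrow> 'b::real_normed_vector" and g' :: "'a \<Rightarrow> ('a \<Rightarrow>\<^sub>L 'b)"
  assumes deriv: "\<And>x. (g has_derivative blinfun_apply (g' x)) (at x)"
    and cont: "continuous_on UNIV g'" and e: "e > 0"
  shows "\<exists>d>0. \<forall>x z. norm (x - a) < d \<longrightarrow> norm (z - a) < d \<longrightarrow>
           norm (g z - g x - g' x (z - x)) \<le> e * norm (z - x)"
proof -
  obtain d where d: "d > 0" "\<forall>y. dist y a < d \<longrightarrow> dist (g' y) (g' a) < e/2"
    using cont e unfolding continuous_on_iff by (meson UNIV_I half_gt_zero)
  have "\<forall>x z. norm (x - a) < d \<longrightarrow> norm (z - a) < d \<longrightarrow>
           norm (g z - g x - g' x (z - x)) \<le> e * norm (z - x)"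
  proof (intro allI impI)
    fix x z assume x: "norm (x - a) < d" and z: "norm (z - a) < d"
    let ?S = "ball a d"
    have xS: "x \<in> ?S" and zS: "z \<in> ?S" using x z by (auto simp: dist_norm norm_minus_commute)
    have seg: "x + t *\<^sub>R (z - x) \<in> ?S" if "t \<in> {0..1}" for t
    proof -
      have "x + t *\<^sub>R (z - x) = (1 - t) *\<^sub>R x + t *\<^sub>R z" by (simp add: algebra_simps)
      thus ?thesis using convexD[OF convex_ball xS zS, of "1 - t" t] that by auto
    qed
    have dv: "(g has_derivative blinfun_apply (g' y)) (at y within ?S)" if "y \<in> ?S" for y
      using deriv has_derivative_at_withinI by blast
    have B: "onorm (blinfun_apply (g' y) - blinfun_apply (g' x)) \<le> e" if "y \<in> ?S" for y
    proof -
      have "blinfun_apply (g' y) - blinfun_apply (g' x) = blinfun_apply (g' y - g' x)"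
        by (auto simp: fun_eq_iff blinfun.diff_left)
      hence "onorm (blinfun_apply (g' y) - blinfun_apply (g' x)) = norm (g' y - g' x)"
        by (simp add: norm_blinfun.rep_eq)
      also have "\<dots> \<le> norm (g' y - g' a) + norm (g' a - g' x)"
        using norm_triangle_ineq[of "g' y - g' a" "g' a - g' x"] by simp
      also have "\<dots> < e/2 + e/2"
        using d(2)[rule_format, of y] d(2)[rule_format, of x] that xS
        by (intro add_strict_mono) (auto simp: dist_norm norm_minus_commute)
      finally show ?thesis by simp
    qed
    have "norm (g z - g x - g' x (z - x)) \<le> norm (z - x) * e"
      by (rule differentiable_bound_linearization[of x z ?S g "\<lambda>y. blinfun_apply (g' y)" x e])
         (use seg dv B xS in auto)
    thus "norm (g z - g x - g' x (z - x)) \<le> e * norm (z - x)" by (simp add: mult.commute)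
  qed
  thus ?thesis using d(1) by blast
qed


theorem mainTheorem11:
  fixes g :: "'a::banach \<Rightarrow> 'b::banach"
    and g' :: "'a \<Rightarrow> ('a \<Rightarrow>\<^sub>L 'b)"
    and f :: "'b \<Rightarrow> ereal"
    and xb :: 'a
  assumes deriv: "\<And>x. (g has_derivative blinfun_apply (g' x)) (at x)"
    and cont_deriv: "continuous_on UNIV g'"
    and proper: "proper_fun f" and lsc: "lsc_fun f" and conv: "convex_fun f"
    and xb_in: "xb \<in> g -` {y. f y \<le> 0}"
    and int_dom: "g xb \<in> interior (effdom f)"
    and mreg: "metrically_regular_around g xb"
  shows "shapiro_around (g -` {y. f y \<le> 0}) xb
    \<and> (\<exists>\<delta>>0. \<forall>x\<in>(g -` {y. f y \<le> 0}) \<inter> ball xb \<delta>.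
          bouligand_cone (g -` {y. f y \<le> 0}) x
            = blinfun_apply (g' x) -` bouligand_cone {y. f y \<le> 0} (g x))
    \<and> epi_shapiro_at (f \<circ> g) xb"
proof -
  obtain \<kappa> U V where kpos: "\<kappa> > 0" and U: "open U" "xb \<in> U" and V: "open V" "g xb \<in> V"
    and mr: "\<forall>x\<in>U. \<forall>y\<in>V. setdist_pt x (g -` {y}) \<le> ereal (\<kappa> * norm (g x - y))"
    using mreg unfolding metrically_regular_around_def by blast
  have MR: "\<exists>z. g z = y \<and> norm (x - z) \<le> \<kappa> * norm (g x - y) + e"
    if "x \<in> U" "y \<in> V" "e > 0" for x y e
  proof -
    have "setdist_pt x (g -` {y}) < ereal (\<kappa> * norm (g x - y) + e)"
    proof -
      have "setdist_pt x (g -` {y}) \<le> ereal (\<kappa> * norm (g x - y))" using mr that by blast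
      moreover have "ereal (\<kappa> * norm (g x - y)) < ereal (\<kappa> * norm (g x - y) + e)" using that by simp
      ultimately show ?thesis by (rule le_less_trans)
    qed
    then obtain z where "z \<in> g -` {y}" "norm (x - z) < \<kappa> * norm (g x - y) + e"
      using sd_lt by blast
    thus ?thesis by auto
  qed
  have lin: "bounded_linear (blinfun_apply (g' x))" for x by (rule blinfun.bounded_linear_right)
  have SDg: "\<exists>d>0. \<forall>x z. norm (x - a) < d \<longrightarrow> norm (z - a) < d \<longrightarrow>
           norm (g z - g x - g' x (z - x)) \<le> e * norm (z - x)" if "e > 0" for a e
    by (rule SD_C1[OF deriv cont_deriv that])
  have contg: "continuous_on UNIV g"
    using deriv has_derivative_continuous continuous_at_imp_continuous_on by blast
  have convK: "convex {y. f y \<le> 0}"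
    unfolding convex_def
  proof (intro ballI allI impI)
    fix y1 y2 and u v :: real
    assume y1: "y1 \<in> {y. f y \<le> 0}" and y2: "y2 \<in> {y. f y \<le> 0}" and uv: "0 \<le> u" "0 \<le> v" "u + v = 1"
    have "(y1, 0) \<in> epigraph f" "(y2, 0) \<in> epigraph f" using y1 y2 by (auto simp: epigraph_def zero_ereal_def[symmetric])
    hence "u *\<^sub>R (y1, 0) + v *\<^sub>R (y2, 0) \<in> epigraph f"
      using conv uv unfolding convex_fun_def convex_def by blast
    thus "u *\<^sub>R y1 + v *\<^sub>R y2 \<in> {y. f y \<le> 0}" by (simp add: epigraph_def zero_ereal_def)
  qed
  interpret A: ctx g "\<lambda>x. blinfun_apply (g' x)" "{y. f y \<le> 0}" xb \<kappa> U V
    by (rule ctx.intro) (use lin SDg contg convK kpos U V MR in auto)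
  have P1: "shapiro_around (g -` {y. f y \<le> 0}) xb"
  proof -
    obtain \<rho> where \<rho>: "\<rho> > 0" "\<forall>a\<in>g -` {y. f y \<le> 0} \<inter> ball xb \<rho>. shapiro_at (g -` {y. f y \<le> 0}) a"
      using A.shapiro by blast
    show ?thesis unfolding shapiro_around_def
      by (rule exI[of _ "ball xb \<rho>"]) (use \<rho> in auto)
  qed
  have P2: "\<exists>\<delta>>0. \<forall>x\<in>(g -` {y. f y \<le> 0}) \<inter> ball xb \<delta>.
          bouligand_cone (g -` {y. f y \<le> 0}) x
            = blinfun_apply (g' x) -` bouligand_cone {y. f y \<le> 0} (g x)"
    using A.tangent_formula .
  define \<alpha>0 where "\<alpha>0 = real_of_ereal (f (g xb))"
  have fin: "f (g xb) = ereal \<alpha>0"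
  proof -
    have "f (g xb) \<noteq> -\<infinity>" using proper unfolding proper_fun_def by blast
    moreover have "f (g xb) \<noteq> \<infinity>" using xb_in by auto
    ultimately show ?thesis unfolding \<alpha>0_def by (cases "f (g xb)") auto
  qed
  define G2 where "G2 p = (g (fst p), snd p)" for p :: "'a \<times> real"
  define G2' where "G2' p q = (blinfun_apply (g' (fst p)) (fst q), snd q)" for p q :: "'a \<times> real"
  have lin2: "bounded_linear (G2' p)" for p
    unfolding G2'_def
    by (intro bounded_linear_Pair bounded_linear_compose[OF lin bounded_linear_fst] bounded_linear_snd)
  have SD2: "\<exists>d>0. \<forall>x z. norm (x - a) < d \<longrightarrow> norm (z - a) < d \<longrightarrow>
           norm (G2 z - G2 x - G2' x (z - x)) \<le> e * norm (z - x)" if e: "e > 0" for a e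
  proof -
    obtain d where d: "d > 0" "\<forall>x z. norm (x - fst a) < d \<longrightarrow> norm (z - fst a) < d \<longrightarrow>
           norm (g z - g x - g' x (z - x)) \<le> e * norm (z - x)"
      using SDg[OF e] by blast
    have "\<forall>x z. norm (x - a) < d \<longrightarrow> norm (z - a) < d \<longrightarrow>
           norm (G2 z - G2 x - G2' x (z - x)) \<le> e * norm (z - x)"
    proof (intro allI impI)
      fix x z :: "'a \<times> real" assume x: "norm (x - a) < d" and z: "norm (z - a) < d"
      have "norm (fst x - fst a) \<le> norm (x - a)" using nfst[of "x - a"] by simp
      moreover have "norm (fst z - fst a) \<le> norm (z - a)" using nfst[of "z - a"] by simp
      ultimately have "norm (g (fst z) - g (fst x) - g' (fst x) (fst z - fst x)) \<le> e * norm (fst z - fst x)"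
        using d(2) x z by auto
      also have "\<dots> \<le> e * norm (z - x)"
        using nfst[of "z - x"] e by (intro mult_left_mono) auto
      finally show "norm (G2 z - G2 x - G2' x (z - x)) \<le> e * norm (z - x)"
        by (simp add: G2_def G2'_def blinfun.diff_right norm_Pair)
    qed
    thus ?thesis using d(1) by blast
  qed
  have contG2: "continuous_on UNIV G2" unfolding G2_def
    by (intro continuous_on_Pair continuous_on_compose2[OF contg] continuous_on_fst continuous_on_snd
          continuous_on_id) auto
  have convE: "convex (epigraph f)" using conv by (simp add: convex_fun_def)
  have MR2: "\<exists>z. G2 z = y \<and> norm (x - z) \<le> (\<kappa> + 1) * norm (G2 x - y) + e"
    if xyU: "x \<in> U \<times> UNIV" "y \<in> V \<times> UNIV" "e > 0" for x y e
  proof -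
    obtain z where z: "g z = fst y" "norm (fst x - z) \<le> \<kappa> * norm (g (fst x) - fst y) + e"
      using MR[of "fst x" "fst y" e] xyU by (auto simp: mem_Times_iff)
    have eq: "x - (z, snd y) = (fst x - z, snd x - snd y)" by (simp add: prod_eq_iff)
    have eq2: "G2 x - y = (g (fst x) - fst y, snd x - snd y)" by (simp add: G2_def prod_eq_iff)
    have "norm (x - (z, snd y)) \<le> norm (fst x - z) + norm (snd x - snd y)"
      unfolding eq by (rule norm_Pair_le)
    also have "\<dots> \<le> \<kappa> * norm (g (fst x) - fst y) + e + norm (snd x - snd y)" using z by simp
    also have "\<dots> \<le> \<kappa> * norm (G2 x - y) + e + norm (G2 x - y)"
      unfolding eq2 using norm_fst_le[of "g (fst x) - fst y" "snd x - snd y"]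
        norm_snd_le[of "snd x - snd y" "g (fst x) - fst y"] kpos
      by (intro add_mono mult_left_mono) auto
    finally have "norm (x - (z, snd y)) \<le> (\<kappa> + 1) * norm (G2 x - y) + e" by (simp add: algebra_simps)
    moreover have "G2 (z, snd y) = y" using z by (simp add: G2_def prod_eq_iff)
    ultimately show ?thesis by blast
  qed
  interpret B: ctx G2 G2' "epigraph f" "(xb, \<alpha>0)" "\<kappa> + 1" "U \<times> UNIV" "V \<times> UNIV"
    by (rule ctx.intro) (use lin2 SD2 contG2 convE kpos U V MR2 in \<open>auto intro: open_Times simp: G2_def\<close>)
  have epi: "G2 -` epigraph f = epigraph (f \<circ> g)"
    by (auto simp: G2_def epigraph_def)
  obtain \<rho> where \<rho>: "\<rho> > 0" "\<forall>a\<in>G2 -` epigraph f \<inter> ball (xb, \<alpha>0) \<rho>. shapiro_at (G2 -` epigraph f) a"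
    using B.shapiro by blast
  have "(xb, \<alpha>0) \<in> G2 -` epigraph f" using fin by (simp add: G2_def epigraph_def)
  hence "shapiro_at (epigraph (f \<circ> g)) (xb, \<alpha>0)" using \<rho> epi by auto
  hence P3: "epi_shapiro_at (f \<circ> g) xb"
    unfolding epi_shapiro_at_def using sum_transfer \<alpha>0_def by auto
  show ?thesis using P1 P2 P3 by blast
qed

end
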